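(* Let $T$ be a theory. Then \[ \mathrm{SI}^\omega(\mathit{sk}^\exists(T)) \equiv \mathrm{SA}_{L(T)} + T + \mathrm{IND}(\mathit{sk}^\omega(L(T))), \] i.e. each theory derives all axioms of the other.
   Context: First-order logic with equality. Skolem symbols: for a language $L$, $\mathfrak{s}_{Qx\varphi}$ ($Q\in\{\forall,\exists\}$, $\varphi$ an $L$ formula) is a new function symbol of arity $|\mathrm{FV}(Qx\varphi)|$; $\mathit{sk}(L)=L$ plus all these symbols, $\mathit{sk}^\omega(L)=\bigcup_i\mathit{sk}^i(L)$. $\mathit{sk}^\exists,\mathit{sk}^\forall$: $\mathit{sk}^Q$ fixes atoms, commutes with $\wedge,\vee$, $\mathit{sk}^Q(\neg A)=\neg\mathit{sk}^{\overline Q}(A)$, $\mathit{sk}^Q(QxA(x,\vec y))=\mathit{sk}^Q(A(\mathfrak{s}_{QxA}(\vec y),\vec y))$ ($\vec y$ exactly the free variables of $QxA$), $\mathit{sk}^Q(\overline QxA)=\overline Qx\,\mathit{sk}^Q(A)$; elementwise on sets. $\mathrm{SA}_L$: universal closures of $\exists x\varphi(x,\vec y)\to\varphi(\mathfrak{s}_{\exists x\varphi}(\vec y),\vec y)$ and $\varphi(\mathfrak{s}_{\forall x\varphi}(\vec y),\vec y)\to\forall x\varphi(x,\vec y)$ for all $\mathit{sk}^\omega(L)$ formulas $\varphi$. $I_x\varphi=\forall\vec z(\varphi(0,\vec z)\wedge\forall x(\varphi(x,\vec z)\to\varphi(s(x),\vec z))\to\forall x\varphi(x,\vec z))$; $\mathrm{IND}(L)=\{I_x\varphi:\varphi$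 an $L$ formula$\}$. $\mathrm{SI}(T)=T+\mathit{sk}^\exists(\mathrm{IND}(L(T)))$, $\mathrm{SI}^\omega(T)=\bigcup_i\mathrm{SI}^i(T)$. *)

theory Defs
  imports Main
begin

datatype 'f trm = Var nat | Fn 'f "'f trm list"

datatype ('f, 'p) fm =
    Eq "'f trm" "'f trm"
  | Pred 'p "'f trm list"
  | Neg "('f, 'p) fm"
  | Conj "('f, 'p) fm" "('f, 'p) fm"
  | Disj "('f, 'p) fm" "('f, 'p) fm"
  | All nat "('f, 'p) fm"
  | Ex nat "('f, 'p) fm"

text \<open>Function symbols: the constant 0, the successor s, base symbols of the
  original language (a base symbol carries its arity), and Skolem symbols
  indexed by the quantified formula \<open>Q x \<phi>\<close> they belong to.\<close>
datatype ('f, 'p) fsym =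
    Zero
  | Succ
  | Base 'f nat
  | Sk "(('f, 'p) fsym, 'p) fm"

type_synonym ('f, 'p) sterm = "('f, 'p) fsym trm"
type_synonym ('f, 'p) form = "(('f, 'p) fsym, 'p) fm"

fun fvt :: "'f trm \<Rightarrow> nat set" where
  "fvt (Var n) = {n}"
| "fvt (Fn f ts) = (\<Union>t\<in>set ts. fvt t)"

fun fv :: "('f, 'p) fm \<Rightarrow> nat set" where
  "fv (Eq s t) = fvt s \<union> fvt t"
| "fv (Pred p ts) = (\<Union>t\<in>set ts. fvt t)"
| "fv (Neg A) = fv A"
| "fv (Conj A B) = fv A \<union> fv B"
| "fv (Disj A B) = fv A \<union> fv B"
| "fv (All x A) = fv A - {x}"
| "fv (Ex x A) = fv A - {x}"

fun substt :: "(nat \<Rightarrow> 'f trm) \<Rightarrow> 'f trm \<Rightarrow> 'f trm" where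
  "substt \<sigma> (Var n) = \<sigma> n"
| "substt \<sigma> (Fn f ts) = Fn f (map (substt \<sigma>) ts)"

definition fresh_bv :: "nat \<Rightarrow> nat set \<Rightarrow> ('f, 'p) fm \<Rightarrow> nat" where
  "fresh_bv x V A = (if x \<notin> V then x else Suc (Max (V \<union> fv A)))"

fun subst :: "(nat \<Rightarrow> 'f trm) \<Rightarrow> ('f, 'p) fm \<Rightarrow> ('f, 'p) fm" where
  "subst \<sigma> (Eq s t) = Eq (substt \<sigma> s) (substt \<sigma> t)"
| "subst \<sigma> (Pred p ts) = Pred p (map (substt \<sigma>) ts)"
| "subst \<sigma> (Neg A) = Neg (subst \<sigma> A)"
| "subst \<sigma> (Conj A B) = Conj (subst \<sigma> A) (subst \<sigma> B)"
| "subst \<sigma> (Disj A B) = Disj (subst \<sigma> A) (subst \<sigma> B)"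
| "subst \<sigma> (All x A) =
     (let y = fresh_bv x (\<Union>z\<in>fv A - {x}. fvt (\<sigma> z)) A
      in All y (subst (\<sigma>(x := Var y)) A))"
| "subst \<sigma> (Ex x A) =
     (let y = fresh_bv x (\<Union>z\<in>fv A - {x}. fvt (\<sigma> z)) A
      in Ex y (subst (\<sigma>(x := Var y)) A))"

definition inst1 :: "('f, 'p) fm \<Rightarrow> nat \<Rightarrow> 'f trm \<Rightarrow> ('f, 'p) fm" where
  "inst1 A x t = subst (Var(x := t)) A"

definition imp :: "('f, 'p) fm \<Rightarrow> ('f, 'p) fm \<Rightarrow> ('f, 'p) fm" where
  "imp A B = Disj (Neg A) B"

definition close :: "('f, 'p) fm \<Rightarrow> ('f, 'p) fm" where
  "close A = foldr All (sorted_list_of_set (fv A)) A"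

definition sentence :: "('f, 'p) fm \<Rightarrow> bool" where
  "sentence A \<longleftrightarrow> fv A = {}"

fun arity :: "('f, 'p) fsym \<Rightarrow> nat" where
  "arity Zero = 0"
| "arity Succ = 1"
| "arity (Base f n) = n"
| "arity (Sk \<phi>) = card (fv \<phi>)"

definition skt :: "('f, 'p) form \<Rightarrow> ('f, 'p) sterm" where
  "skt \<phi> = Fn (Sk \<phi>) (map Var (sorted_list_of_set (fv \<phi>)))"

fun fsz :: "('f, 'p) fm \<Rightarrow> nat" where
  "fsz (Eq s t) = 0"
| "fsz (Pred p ts) = 0"
| "fsz (Neg A) = Suc (fsz A)"
| "fsz (Conj A B) = Suc (fsz A + fsz B)"
| "fsz (Disj A B) = Suc (fsz A + fsz B)"
| "fsz (All x A) = Suc (fsz A)"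
| "fsz (Ex x A) = Suc (fsz A)"

lemma fsz_subst[simp]: "fsz (subst \<sigma> A) = fsz A"
  by (induction A arbitrary: \<sigma>) (simp_all add: Let_def)

text \<open>\<open>skQ True = sk\<^sup>\<exists>\<close>, \<open>skQ False = sk\<^sup>\<forall>\<close>.\<close>
function skQ :: "bool \<Rightarrow> ('f, 'p) form \<Rightarrow> ('f, 'p) form" where
  "skQ e (Eq s t) = Eq s t"
| "skQ e (Pred p ts) = Pred p ts"
| "skQ e (Neg A) = Neg (skQ (\<not> e) A)"
| "skQ e (Conj A B) = Conj (skQ e A) (skQ e B)"
| "skQ e (Disj A B) = Disj (skQ e A) (skQ e B)"
| "skQ e (All x A) =
     (if e then All x (skQ e A) else skQ e (inst1 A x (skt (All x A))))"
| "skQ e (Ex x A) =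
     (if e then skQ e (inst1 A x (skt (Ex x A))) else Ex x (skQ e A))"
  by pat_completeness auto
termination
  by (relation "measure (\<lambda>(e, A). fsz A)") (auto simp: inst1_def)

abbreviation skE :: "('f, 'p) form \<Rightarrow> ('f, 'p) form" where
  "skE \<equiv> skQ True"

record ('f, 'p) lang =
  fns :: "('f, 'p) fsym set"
  preds :: "('p \<times> nat) set"

fun wf_trm :: "('f, 'p) fsym set \<Rightarrow> ('f, 'p) sterm \<Rightarrow> bool" where
  "wf_trm F (Var n) = True"
| "wf_trm F (Fn f ts) = (f \<in> F \<and> length ts = arity f \<and> (\<forall>t\<in>set ts. wf_trm F t))"

fun wf_fm :: "('f, 'p) lang \<Rightarrow> ('f, 'p) form \<Rightarrow> bool" where
  "wf_fm L (Eq s t) = (wf_trm (fns L) s \<and> wf_trm (fns L) t)"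
| "wf_fm L (Pred p ts) = ((p, length ts) \<in> preds L \<and> (\<forall>t\<in>set ts. wf_trm (fns L) t))"
| "wf_fm L (Neg A) = wf_fm L A"
| "wf_fm L (Conj A B) = (wf_fm L A \<and> wf_fm L B)"
| "wf_fm L (Disj A B) = (wf_fm L A \<and> wf_fm L B)"
| "wf_fm L (All x A) = wf_fm L A"
| "wf_fm L (Ex x A) = wf_fm L A"

definition skL :: "('f, 'p) lang \<Rightarrow> ('f, 'p) lang" where
  "skL L = L\<lparr>fns := fns L \<union> {Sk (All x A) | x A. wf_fm L A} \<union> {Sk (Ex x A) | x A. wf_fm L A}\<rparr>"

definition skw :: "('f, 'p) lang \<Rightarrow> ('f, 'p) lang" where
  "skw L = L\<lparr>fns := (\<Union>i. fns ((skL ^^ i) L))\<rparr>"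

definition SA :: "('f, 'p) lang \<Rightarrow> ('f, 'p) form set" where
  "SA L =
     {close (imp (Ex x A) (inst1 A x (skt (Ex x A)))) | x A. wf_fm (skw L) A}
   \<union> {close (imp (inst1 A x (skt (All x A))) (All x A)) | x A. wf_fm (skw L) A}"

definition Ind :: "nat \<Rightarrow> ('f, 'p) form \<Rightarrow> ('f, 'p) form" where
  "Ind x A = close (imp (Conj (inst1 A x (Fn Zero []))
                              (All x (imp A (inst1 A x (Fn Succ [Var x])))))
                        (All x A))"

definition IND :: "('f, 'p) lang \<Rightarrow> ('f, 'p) form set" where
  "IND L = {Ind x A | x A. wf_fm L A}"

text \<open>A theory is a pair (language, set of axioms).
  \<open>SI(T) = T + sk\<^sup>\<exists>(IND(L(T)))\<close>, a theory in the language \<open>sk(L(T))\<close>.\<close>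
definition SI :: "('f, 'p) lang \<times> ('f, 'p) form set \<Rightarrow> ('f, 'p) lang \<times> ('f, 'p) form set" where
  "SI Th = (skL (fst Th), snd Th \<union> skE ` IND (fst Th))"

definition SIw :: "('f, 'p) lang \<times> ('f, 'p) form set \<Rightarrow> ('f, 'p) form set" where
  "SIw Th = (\<Union>i. snd ((SI ^^ i) Th))"

fun evt :: "('f \<Rightarrow> 'd list \<Rightarrow> 'd) \<Rightarrow> (nat \<Rightarrow> 'd) \<Rightarrow> 'f trm \<Rightarrow> 'd" where
  "evt I e (Var n) = e n"
| "evt I e (Fn f ts) = I f (map (evt I e) ts)"

fun ev :: "('f \<Rightarrow> 'd list \<Rightarrow> 'd) \<Rightarrow> ('p \<Rightarrow> 'd list \<Rightarrow> bool) \<Rightarrow> (nat \<Rightarrow> 'd) \<Rightarrow> ('f, 'p) fm \<Rightarrow> bool" where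
  "ev I R e (Eq s t) = (evt I e s = evt I e t)"
| "ev I R e (Pred p ts) = R p (map (evt I e) ts)"
| "ev I R e (Neg A) = (\<not> ev I R e A)"
| "ev I R e (Conj A B) = (ev I R e A \<and> ev I R e B)"
| "ev I R e (Disj A B) = (ev I R e A \<or> ev I R e B)"
| "ev I R e (All x A) = (\<forall>d. ev I R (e(x := d)) A)"
| "ev I R e (Ex x A) = (\<exists>d. ev I R (e(x := d)) A)"

definition models :: "('f \<Rightarrow> 'd list \<Rightarrow> 'd) \<Rightarrow> ('p \<Rightarrow> 'd list \<Rightarrow> bool) \<Rightarrow> ('f, 'p) fm set \<Rightarrow> bool" where
  "models I R S \<longleftrightarrow> (\<forall>A\<in>S. \<forall>e. ev I R e A)"

end

theory Submission
  imports Defs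
begin

lemma finite_fvt[simp]: "finite (fvt t)" by (induction t) (auto cong: map_cong)
lemma finite_fv[simp]: "finite (fv A)" by (induction A) auto

lemma evt_cong: "(\<forall>n\<in>fvt t. e n = e' n) \<Longrightarrow> evt I e t = evt I e' t"
  by (induction t) (auto cong: map_cong)

lemma ev_cong: "(\<forall>n\<in>fv A. e n = e' n) \<Longrightarrow> ev I R e A = ev I R e' A"
proof (induction A arbitrary: e e')
  case (Eq s t) then show ?case using evt_cong[of s e e' I] evt_cong[of t e e' I] by auto
next
  case (Pred p ts)
  have "map (evt I e) ts = map (evt I e') ts"
    using Pred evt_cong[of _ e e' I] by (simp add: map_eq_conv)
  then show ?case by (simp only: ev.simps)
next
  case (All x A)
  have "ev I R (e(x:=d)) A = ev I R (e'(x:=d)) A" for d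
    using All.prems by (intro All.IH) auto
  then show ?case by simp
next
  case (Ex x A)
  have "ev I R (e(x:=d)) A = ev I R (e'(x:=d)) A" for d
    using Ex.prems by (intro Ex.IH) auto
  then show ?case by simp
next
  case (Conj A B)
  have "ev I R e A = ev I R e' A" "ev I R e B = ev I R e' B"
    using Conj.prems by (intro Conj.IH; auto)+
  then show ?case by simp
next
  case (Disj A B)
  have "ev I R e A = ev I R e' A" "ev I R e B = ev I R e' B"
    using Disj.prems by (intro Disj.IH; auto)+
  then show ?case by simp
qed auto

lemma evt_subst: "evt I e (substt \<sigma> t) = evt I (\<lambda>n. evt I e (\<sigma> n)) t"
  by (induction t) (auto cong: map_cong)

lemma fresh_bv_notin: "finite V \<Longrightarrow> fresh_bv x V A \<notin> V"
  proof
  assume f: "finite V" and m: "fresh_bv x V A \<in> V"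
  show False
  proof (cases "x \<in> V")
    case True
    then have "Suc (Max (V \<union> fv A)) \<in> V \<union> fv A" using m by (simp add: fresh_bv_def)
    then have "Suc (Max (V \<union> fv A)) \<le> Max (V \<union> fv A)" using f by (intro Max_ge) auto
    then show False by simp
  qed (use m in \<open>simp add: fresh_bv_def\<close>)
qed

lemma ev_subst: "ev I R e (subst \<sigma> A) = ev I R (\<lambda>n. evt I e (\<sigma> n)) A"
proof (induction A arbitrary: \<sigma> e)
  case (Eq s t) then show ?case by (simp add: evt_subst)
next
  case (Pred p ts) then show ?case by (simp add: evt_subst o_def)
next
  case (All x A)
  define V where "V = (\<Union>z\<in>fv A - {x}. fvt (\<sigma> z))"
  define y where "y = fresh_bv x V A"
  have fin: "finite V" unfolding V_def by auto
  have yV: "y \<notin> V" using fresh_bv_notin[OF fin] y_def by auto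
  have eq: "ev I R (\<lambda>n. evt I (e(y:=d)) ((\<sigma>(x:=Var y)) n)) A = ev I R ((\<lambda>n. evt I e (\<sigma> n))(x:=d)) A" for d
  proof (rule ev_cong, rule ballI)
    fix n assume n: "n \<in> fv A"
    show "evt I (e(y:=d)) ((\<sigma>(x:=Var y)) n) = ((\<lambda>n. evt I e (\<sigma> n))(x:=d)) n"
    proof (cases "n = x")
      case False
      then have "fvt (\<sigma> n) \<subseteq> V" using n unfolding V_def by auto
      then have "y \<notin> fvt (\<sigma> n)" using yV by auto
      then show ?thesis using False by (auto intro: evt_cong)
    qed simp
  qed
  have "ev I R e (subst \<sigma> (All x A)) = (\<forall>d. ev I R (e(y:=d)) (subst (\<sigma>(x:=Var y)) A))"
    by (simp add: V_def y_def Let_def)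
  also have "\<dots> = (\<forall>d. ev I R ((\<lambda>n. evt I e (\<sigma> n))(x:=d)) A)" using All.IH eq by (simp del: fun_upd_apply)
  finally show ?case by simp
next
  case (Ex x A)
  define V where "V = (\<Union>z\<in>fv A - {x}. fvt (\<sigma> z))"
  define y where "y = fresh_bv x V A"
  have fin: "finite V" unfolding V_def by auto
  have yV: "y \<notin> V" using fresh_bv_notin[OF fin] y_def by auto
  have eq: "ev I R (\<lambda>n. evt I (e(y:=d)) ((\<sigma>(x:=Var y)) n)) A = ev I R ((\<lambda>n. evt I e (\<sigma> n))(x:=d)) A" for d
  proof (rule ev_cong, rule ballI)
    fix n assume n: "n \<in> fv A"
    show "evt I (e(y:=d)) ((\<sigma>(x:=Var y)) n) = ((\<lambda>n. evt I e (\<sigma> n))(x:=d)) n"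
    proof (cases "n = x")
      case False
      then have "fvt (\<sigma> n) \<subseteq> V" using n unfolding V_def by auto
      then have "y \<notin> fvt (\<sigma> n)" using yV by auto
      then show ?thesis using False by (auto intro: evt_cong)
    qed simp
  qed
  have "ev I R e (subst \<sigma> (Ex x A)) = (\<exists>d. ev I R (e(y:=d)) (subst (\<sigma>(x:=Var y)) A))"
    by (simp add: V_def y_def Let_def)
  also have "\<dots> = (\<exists>d. ev I R ((\<lambda>n. evt I e (\<sigma> n))(x:=d)) A)" using Ex.IH eq by (simp del: fun_upd_apply)
  finally show ?case by simp
qed auto

lemma ev_inst1: "ev I R e (inst1 A x t) = ev I R (e(x := evt I e t)) A"
  unfolding inst1_def ev_subst by (rule ev_cong) auto

lemma substt_id: "(\<forall>z\<in>fvt t. \<sigma> z = Var z) \<Longrightarrow> substt \<sigma> t = t"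
  by (induction t) (auto intro: map_idI)

lemma subst_id: "(\<forall>z\<in>fv A. \<sigma> z = Var z) \<Longrightarrow> subst \<sigma> A = A"
proof (induction A arbitrary: \<sigma>)
  case (All x A)
  have V: "(\<Union>z\<in>fv A - {x}. fvt (\<sigma> z)) = fv A - {x}" using All.prems by auto
  have "fresh_bv x (fv A - {x}) A = x" by (simp add: fresh_bv_def)
  then show ?case using All by (simp add: V Let_def)
next
  case (Ex x A)
  have V: "(\<Union>z\<in>fv A - {x}. fvt (\<sigma> z)) = fv A - {x}" using Ex.prems by auto
  have "fresh_bv x (fv A - {x}) A = x" by (simp add: fresh_bv_def)
  then show ?case using Ex by (simp add: V Let_def)
qed (auto simp: substt_id intro: map_idI)

lemma inst1_id: "x \<notin> fv A \<Longrightarrow> inst1 A x t = A"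
  unfolding inst1_def by (rule subst_id) auto

lemma wf_substt: "wf_trm F t \<Longrightarrow> (\<forall>n. wf_trm F (\<sigma> n)) \<Longrightarrow> wf_trm F (substt \<sigma> t)"
  by (induction t) (auto cong: map_cong)

lemma wf_subst: "wf_fm L A \<Longrightarrow> (\<forall>n. wf_trm (fns L) (\<sigma> n)) \<Longrightarrow> wf_fm L (subst \<sigma> A)"
  by (induction A arbitrary: \<sigma>) (auto simp: Let_def wf_substt)

lemma wf_trm_mono: "wf_trm F t \<Longrightarrow> F \<subseteq> G \<Longrightarrow> wf_trm G t"
  by (induction t) (auto cong: map_cong)

lemma wf_fm_mono: "wf_fm L A \<Longrightarrow> fns L \<subseteq> fns L' \<Longrightarrow> preds L \<subseteq> preds L' \<Longrightarrow> wf_fm L' A"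
  by (induction A) (auto intro: wf_trm_mono)


lemma preds_skL[simp]: "preds (skL L) = preds L" by (simp add: skL_def)
lemma preds_skLn[simp]: "preds ((skL^^i) L) = preds L" by (induction i) auto
lemma preds_skw[simp]: "preds (skw L) = preds L" by (simp add: skw_def)
lemma fns_skw: "fns (skw L) = (\<Union>i. fns ((skL^^i) L))" by (simp add: skw_def)
lemma fns_skL_mono: "fns L \<subseteq> fns (skL L)" by (auto simp: skL_def)
lemma fns_chain: "i \<le> j \<Longrightarrow> fns ((skL^^i) L) \<subseteq> fns ((skL^^j) L)"
  by (rule lift_Suc_mono_le[where f="\<lambda>i. fns ((skL^^i) L)"]) (auto intro: fns_skL_mono[THEN subsetD])

lemma wf_chain: "wf_fm ((skL^^i) L) A \<Longrightarrow> i \<le> j \<Longrightarrow> wf_fm ((skL^^j) L) A"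
  by (erule wf_fm_mono) (auto dest: fns_chain)

lemma wf_in_skw: "wf_fm ((skL^^i) L) A \<Longrightarrow> wf_fm (skw L) A"
  by (erule wf_fm_mono) (auto simp: fns_skw)

lemma wf_trm_chain: "wf_trm (fns ((skL^^i) L)) t \<Longrightarrow> i \<le> j \<Longrightarrow> wf_trm (fns ((skL^^j) L)) t"
  by (erule wf_trm_mono) (rule fns_chain)

lemma trm_in_chain: "wf_trm (fns (skw L)) t \<Longrightarrow> \<exists>i. wf_trm (fns ((skL^^i) L)) t"
proof (induction t)
  case (Var n) then show ?case by auto
next
  case (Fn f ts)
  have "\<forall>t\<in>set ts. \<exists>i. wf_trm (fns ((skL^^i) L)) t" using Fn by auto
  then have "\<exists>i. \<forall>t\<in>set ts. wf_trm (fns ((skL^^i) L)) t"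
  proof (induction ts)
    case (Cons a ts)
    then obtain i j where "wf_trm (fns ((skL^^i) L)) a" "\<forall>t\<in>set ts. wf_trm (fns ((skL^^j) L)) t" by auto
    then have "\<forall>t\<in>set (a#ts). wf_trm (fns ((skL^^(max i j)) L)) t"
      by (auto elim!: wf_trm_chain)
    then show ?case by blast
  qed simp
  then obtain i where i: "\<forall>t\<in>set ts. wf_trm (fns ((skL^^i) L)) t" by blast
  obtain k where k: "f \<in> fns ((skL^^k) L)" using Fn.prems by (auto simp: fns_skw)
  have "wf_trm (fns ((skL^^(max i k)) L)) (Fn f ts)"
    using i k Fn.prems fns_chain[of i "max i k" L] fns_chain[of k "max i k" L]
    by (auto elim!: wf_trm_mono)
  then show ?case by blast
qed

lemma trms_in_chain: "\<forall>t\<in>set ts. wf_trm (fns (skw L)) t \<Longrightarrow> \<exists>i. \<forall>t\<in>set ts. wf_trm (fns ((skL^^i) L)) t"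
proof (induction ts)
  case (Cons a ts)
  then obtain i j where "wf_trm (fns ((skL^^i) L)) a" "\<forall>t\<in>set ts. wf_trm (fns ((skL^^j) L)) t"
    using trm_in_chain by (metis list.set_intros(1) set_subset_Cons subsetD)
  then have "\<forall>t\<in>set (a#ts). wf_trm (fns ((skL^^(max i j)) L)) t"
    by (auto elim!: wf_trm_chain)
  then show ?case by blast
qed simp

lemma wf_fm_skw: "wf_fm (skw L) A \<Longrightarrow> \<exists>i. wf_fm ((skL^^i) L) A"
proof (induction A)
  case (Eq s t)
  then obtain i where "\<forall>u\<in>set [s,t]. wf_trm (fns ((skL^^i) L)) u" using trms_in_chain[of "[s,t]" L] by auto
  then show ?case by auto
next
  case (Pred p ts)
  then obtain i where "\<forall>u\<in>set ts. wf_trm (fns ((skL^^i) L)) u" using trms_in_chain[of ts L] by auto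
  then show ?case using Pred by auto
next
  case (Conj A B)
  then obtain i j where "wf_fm ((skL^^i) L) A" "wf_fm ((skL^^j) L) B" by auto
  then have "wf_fm ((skL^^(max i j)) L) (Conj A B)" by (auto elim: wf_chain)
  then show ?case by blast
next
  case (Disj A B)
  then obtain i j where "wf_fm ((skL^^i) L) A" "wf_fm ((skL^^j) L) B" by auto
  then have "wf_fm ((skL^^(max i j)) L) (Disj A B)" by (auto elim: wf_chain)
  then show ?case by blast
qed auto

lemma wf_skt: "Sk \<phi> \<in> F \<Longrightarrow> wf_trm F (skt \<phi>)"
  by (simp add: skt_def length_sorted_list_of_set)

lemma wf_skt_skw:
  assumes "wf_fm (skw L) A"
  shows "wf_trm (fns (skw L)) (skt (Ex x A))" "wf_trm (fns (skw L)) (skt (All x A))"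
proof -
  obtain i where "wf_fm ((skL^^i) L) A" using wf_fm_skw[OF assms] by blast
  then have "Sk (Ex x A) \<in> fns ((skL^^Suc i) L)" "Sk (All x A) \<in> fns ((skL^^Suc i) L)"
    by (auto simp: skL_def)
  then have "Sk (Ex x A) \<in> fns (skw L)" "Sk (All x A) \<in> fns (skw L)"
    unfolding fns_skw by (blast intro: UN_I[of "Suc i"])+
  then show "wf_trm (fns (skw L)) (skt (Ex x A))" "wf_trm (fns (skw L)) (skt (All x A))"
    by (auto simp: fns_skw intro!: wf_skt)
qed

lemma wf_inst1: "wf_fm L A \<Longrightarrow> wf_trm (fns L) t \<Longrightarrow> wf_fm L (inst1 A x t)"
  unfolding inst1_def by (rule wf_subst) auto

lemma SI_pow: "fst ((SI^^n) Th) = (skL^^n) (fst Th) \<and>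
   snd ((SI^^n) Th) = snd Th \<union> (\<Union>j<n. skE ` IND ((skL^^j) (fst Th)))"
  by (induction n) (auto simp: SI_def lessThan_Suc)

lemma SIw_mem: "B \<in> SIw (skL L, S) \<longleftrightarrow> B \<in> S \<or> (\<exists>j. B \<in> skE ` IND ((skL^^Suc j) L))"
  by (auto simp: SIw_def SI_pow funpow_Suc_right simp del: funpow.simps)

lemma ev_foldr_All: "(\<forall>e. ev I R e (foldr All xs A)) = (\<forall>e. ev I R e A)"
proof (induction xs)
  case (Cons x xs)
  have "(\<forall>e. ev I R e (foldr All (x#xs) A)) = (\<forall>e. ev I R e (foldr All xs A))"
    by simp (metis fun_upd_triv)
  then show ?case using Cons by simp
qed simp

lemma ev_close: "(\<forall>e. ev I R e (close A)) = (\<forall>e. ev I R e A)"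
  unfolding close_def by (rule ev_foldr_All)

lemma skE_foldr: "skE (foldr All xs A) = foldr All xs (skE A)"
  by (induction xs) auto

lemma wf_foldr: "wf_fm L (foldr All xs A) = wf_fm L A"
  by (induction xs) auto

lemma wf_Ind: "Zero \<in> fns L \<Longrightarrow> Succ \<in> fns L \<Longrightarrow> wf_fm L A \<Longrightarrow> wf_fm L (Ind x A)"
  unfolding Ind_def close_def imp_def wf_foldr by (auto intro!: wf_inst1)

abbreviation skA :: "('f, 'p) form \<Rightarrow> ('f, 'p) form" where "skA \<equiv> skQ False"

definition eqv where "eqv I R A \<longleftrightarrow> (\<forall>e. ev I R e (skE A) = ev I R e A \<and> ev I R e (skA A) = ev I R e A)"

definition skox where "skox I R x A \<longleftrightarrow> (\<forall>e.
   (ev I R e (Ex x A) \<longrightarrow> ev I R e (inst1 A x (skt (Ex x A)))) \<and>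
   (ev I R e (inst1 A x (skt (All x A))) \<longrightarrow> ev I R e (All x A)))"

lemma EQ_gen:
  assumes step: "\<And>x A. wf_fm (skw L) A \<Longrightarrow> eqv I R A \<Longrightarrow> eqv I R (inst1 A x (skt (Ex x A)))
     \<Longrightarrow> eqv I R (inst1 A x (skt (All x A))) \<Longrightarrow> skox I R x A"
  shows "wf_fm (skw L) \<phi> \<Longrightarrow> eqv I R \<phi>"
proof (induction "fsz \<phi>" arbitrary: \<phi> rule: less_induct)
  case less
  show ?case
  proof (cases \<phi>)
    case (Neg A)
    then have "eqv I R A" using less by auto
    then show ?thesis using Neg by (simp add: eqv_def)
  next
    case (Conj A B)
    then have "eqv I R A" "eqv I R B" using less by auto
    then show ?thesis using Conj by (simp add: eqv_def)
  next
    case (Disj A B)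
    then have "eqv I R A" "eqv I R B" using less by auto
    then show ?thesis using Disj by (simp add: eqv_def)
  next
    case (All x A)
    have wA: "wf_fm (skw L) A" using less All by simp
    have eA: "eqv I R A" using less All by auto
    have e1: "eqv I R (inst1 A x (skt (Ex x A)))"
      using wf_inst1[OF wA wf_skt_skw(1)[OF wA]] All by (intro less.hyps) (auto simp: inst1_def)
    have e2: "eqv I R (inst1 A x (skt (All x A)))"
      using wf_inst1[OF wA wf_skt_skw(2)[OF wA]] All by (intro less.hyps) (auto simp: inst1_def)
    have sk: "skox I R x A" using step[OF wA eA e1 e2] .
    show ?thesis unfolding All eqv_def
    proof
      fix e
      show "ev I R e (skE (All x A)) = ev I R e (All x A) \<and> ev I R e (skA (All x A)) = ev I R e (All x A)"
        using eA e2 sk unfolding eqv_def skox_def by (auto simp: ev_inst1)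
    qed
  next
    case (Ex x A)
    have wA: "wf_fm (skw L) A" using less Ex by simp
    have eA: "eqv I R A" using less Ex by auto
    have e1: "eqv I R (inst1 A x (skt (Ex x A)))"
      using wf_inst1[OF wA wf_skt_skw(1)[OF wA]] Ex by (intro less.hyps) (auto simp: inst1_def)
    have e2: "eqv I R (inst1 A x (skt (All x A)))"
      using wf_inst1[OF wA wf_skt_skw(2)[OF wA]] Ex by (intro less.hyps) (auto simp: inst1_def)
    have sk: "skox I R x A" using step[OF wA eA e1 e2] .
    show ?thesis unfolding Ex eqv_def
    proof
      fix e
      show "ev I R e (skE (Ex x A)) = ev I R e (Ex x A) \<and> ev I R e (skA (Ex x A)) = ev I R e (Ex x A)"
        using eA e1 sk unfolding eqv_def skox_def by (auto simp: ev_inst1)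
    qed
  qed (auto simp: eqv_def)
qed


lemma Ind_fresh:
  assumes "u \<notin> fv \<psi>"
  shows "skE (Ind u \<psi>) = foldr All (sorted_list_of_set (fv (imp (Conj \<psi> (All u (imp \<psi> \<psi>))) (All u \<psi>))))
     (Disj (Neg (Conj (skA \<psi>) (Disj (Neg (skE \<psi>)) (skA \<psi>)))) (All u (skE \<psi>)))"
proof -
  have i1: "inst1 \<psi> u t = \<psi>" for t using assms by (rule inst1_id)
  have i2: "inst1 (Disj (Neg \<psi>) \<psi>) u t = Disj (Neg \<psi>) \<psi>" for t using assms by (intro inst1_id) simp
  show ?thesis unfolding Ind_def i1 close_def skE_foldr by (simp add: i2 imp_def)
qed

lemma key_sk:
  assumes H: "models I R (SIw (skL L, S))" and w: "wf_fm (skw L) \<psi>"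
    and a: "ev I R e (skA \<psi>)"
  shows "ev I R e (skE \<psi>)"
proof -
  obtain u where u: "u \<notin> fv \<psi>" using ex_new_if_finite[OF infinite_UNIV_nat finite_fv] by blast
  obtain i where "wf_fm ((skL^^i) L) \<psi>" using wf_fm_skw[OF w] by blast
  then have "wf_fm ((skL^^Suc i) L) \<psi>" by (rule wf_chain) simp
  then have "skE (Ind u \<psi>) \<in> SIw (skL L, S)" unfolding SIw_mem IND_def by blast
  then have "\<forall>e. ev I R e (skE (Ind u \<psi>))" using H by (simp add: models_def)
  then have "\<forall>e. ev I R e (Disj (Neg (Conj (skA \<psi>) (Disj (Neg (skE \<psi>)) (skA \<psi>)))) (All u (skE \<psi>)))"
    unfolding Ind_fresh[OF u] ev_foldr_All .
  then have "ev I R e (Disj (Neg (Conj (skA \<psi>) (Disj (Neg (skE \<psi>)) (skA \<psi>)))) (All u (skE \<psi>)))" by blast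
  then have "\<forall>d. ev I R (e(u:=d)) (skE \<psi>)" using a by (simp only: ev.simps) blast
  then have "ev I R (e(u:= e u)) (skE \<psi>)" by blast
  then show ?thesis by (simp only: fun_upd_triv)
qed

theorem proposition6:
  fixes L :: "('f, 'p) lang" and T :: "('f, 'p) form set"
    and I :: "('f, 'p) fsym \<Rightarrow> 'd list \<Rightarrow> 'd" and R :: "'p \<Rightarrow> 'd list \<Rightarrow> bool"
  assumes "Zero \<in> fns L" and "Succ \<in> fns L"
    and "\<forall>\<phi>. Sk \<phi> \<notin> fns L"
    and "\<forall>A\<in>T. wf_fm L A \<and> sentence A"
  shows "models I R (SIw (skL L, skE ` T)) \<longleftrightarrow> models I R (SA L \<union> T \<union> IND (skw L))"
proof -
  have Z: "Zero \<in> fns (skw L)" "Succ \<in> fns (skw L)" using assms(1,2) unfolding fns_skw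
    by (intro UN_I[of 0]; simp)+
  have TL: "A \<in> T \<Longrightarrow> wf_fm (skw L) A" for A using assms(4) wf_in_skw[of 0 L A] by auto
  show ?thesis
  proof
    assume H: "models I R (SIw (skL L, skE ` T))"
    have step: "skox I R x A" if wA: "wf_fm (skw L) A" and eA: "eqv I R A"
      and e1: "eqv I R (inst1 A x (skt (Ex x A)))" and e2: "eqv I R (inst1 A x (skt (All x A)))" for x A
      unfolding skox_def
    proof (intro allI conjI impI)
      fix e
      assume "ev I R e (Ex x A)"
      then have "ev I R e (skA (Ex x A))" using eA by (simp add: eqv_def)
      then have "ev I R e (skE (Ex x A))" using key_sk[OF H, of "Ex x A" e] wA by simp
      then show "ev I R e (inst1 A x (skt (Ex x A)))" using e1 by (simp add: eqv_def)
    next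
      fix e
      assume "ev I R e (inst1 A x (skt (All x A)))"
      then have "ev I R e (skA (All x A))" using e2 by (simp add: eqv_def)
      then have "\<not> ev I R e (skE (Neg (All x A)))" by simp
      then have "\<not> ev I R e (skA (Neg (All x A)))" using key_sk[OF H, of "Neg (All x A)"] wA by auto
      then show "ev I R e (All x A)" using eA by (simp add: eqv_def)
    qed
    have EQ: "wf_fm (skw L) B \<Longrightarrow> eqv I R B" for B using EQ_gen[of L I R, OF step] by blast
    show "models I R (SA L \<union> T \<union> IND (skw L))"
      unfolding models_def
    proof (intro ballI allI)
      fix B e assume "B \<in> SA L \<union> T \<union> IND (skw L)"
      then consider (SA) "B \<in> SA L" | (T) "B \<in> T" | (IND) "B \<in> IND (skw L)" by blast
      then show "ev I R e B"
      proof cases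
        case SA
        then obtain x A where wA: "wf_fm (skw L) A" and
          B: "B = close (imp (Ex x A) (inst1 A x (skt (Ex x A)))) \<or>
              B = close (imp (inst1 A x (skt (All x A))) (All x A))"
          unfolding SA_def by blast
        have "skox I R x A"
          using step[OF wA EQ[OF wA] EQ[OF wf_inst1[OF wA wf_skt_skw(1)[OF wA]]]
              EQ[OF wf_inst1[OF wA wf_skt_skw(2)[OF wA]]]] .
        then have "\<forall>e. ev I R e (close (imp (Ex x A) (inst1 A x (skt (Ex x A)))))"
             "\<forall>e. ev I R e (close (imp (inst1 A x (skt (All x A))) (All x A)))"
          unfolding ev_close skox_def imp_def by auto
        then show ?thesis using B by blast
      next
        case T
        then have "skE B \<in> SIw (skL L, skE ` T)" unfolding SIw_mem by blast
        then have "ev I R e (skE B)" using H by (simp add: models_def)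
        then show ?thesis using EQ[OF TL[OF T]] by (simp add: eqv_def)
      next
        case IND
        then obtain x A where wA: "wf_fm (skw L) A" and B: "B = Ind x A" unfolding IND_def by blast
        obtain i where "wf_fm ((skL^^i) L) A" using wf_fm_skw[OF wA] by blast
        then have "wf_fm ((skL^^Suc i) L) A" by (rule wf_chain) simp
        then have "skE B \<in> SIw (skL L, skE ` T)" unfolding SIw_mem IND_def B by blast
        then have "ev I R e (skE B)" using H by (simp add: models_def)
        then show ?thesis using EQ[OF wf_Ind[OF Z wA]] B by (simp add: eqv_def)
      qed
    qed
  next
    assume H: "models I R (SA L \<union> T \<union> IND (skw L))"
    have step: "skox I R x A" if wA: "wf_fm (skw L) A" for x A
    proof -
      have "close (imp (Ex x A) (inst1 A x (skt (Ex x A)))) \<in> SA L"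
           "close (imp (inst1 A x (skt (All x A))) (All x A)) \<in> SA L"
        using wA unfolding SA_def by blast+
      then have "\<forall>e. ev I R e (close (imp (Ex x A) (inst1 A x (skt (Ex x A)))))"
             "\<forall>e. ev I R e (close (imp (inst1 A x (skt (All x A))) (All x A)))"
        using H by (auto simp: models_def)
      then show ?thesis unfolding ev_close skox_def imp_def by auto
    qed
    have EQ: "wf_fm (skw L) B \<Longrightarrow> eqv I R B" for B using EQ_gen[of L I R, OF step] by blast
    show "models I R (SIw (skL L, skE ` T))"
      unfolding models_def
    proof (intro ballI allI)
      fix B e assume "B \<in> SIw (skL L, skE ` T)"
      then consider (T) A where "A \<in> T" "B = skE A" | (IND) j where "B \<in> skE ` IND ((skL^^Suc j) L)"
        unfolding SIw_mem by blast
      then show "ev I R e B"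
      proof cases
        case T
        then have "ev I R e A" using H by (auto simp: models_def)
        then show ?thesis using EQ[OF TL[OF T(1)]] T by (simp add: eqv_def)
      next
        case IND
        then obtain x A where wA: "wf_fm ((skL^^Suc j) L) A" and B: "B = skE (Ind x A)"
          unfolding IND_def by blast
        have wA': "wf_fm (skw L) A" using wf_in_skw[OF wA] .
        then have "Ind x A \<in> IND (skw L)" unfolding IND_def by blast
        then have "ev I R e (Ind x A)" using H by (auto simp: models_def)
        then show ?thesis using EQ[OF wf_Ind[OF Z wA']] B by (simp add: eqv_def)
      qed
    qed
  qed
qed

end
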